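(* Let $n_0, n_1$ be positive integers and consider fixed (nonrandom) matrices $\mathbf{Z}_0 \in \mathbb{R}^{n_0\times m_0}$, $\mathbf{X}_0 \in \mathbb{R}^{n_0\times k}$, $\mathbf{W}_1 \in \mathbb{R}^{n_1\times k_1}$, $\mathbf{X}_1 \in \mathbb{R}^{n_1\times k}$, where the columns of $\mathbf{X}_0$ and $\mathbf{X}_1$ correspond to the same predictors in the same order, $\mathbf{Z}_0^{\prime}\mathbf{Z}_0$ and $\mathbf{W}_1^{\prime}\mathbf{W}_1$ are invertible, and $\tilde{\mathbf{X}}_0^{\prime}\tilde{\mathbf{X}}_0$ is invertible, where $$\mathbf{M}_0 = \mathbf{I} - \mathbf{Z}_0(\mathbf{Z}_0^{\prime}\mathbf{Z}_0)^{-1}\mathbf{Z}_0^{\prime},\quad \tilde{\mathbf{X}}_0 = \mathbf{M}_0\mathbf{X}_0,\quad \mathbf{M}_1 = \mathbf{I} - \mathbf{W}_1(\mathbf{W}_1^{\prime}\mathbf{W}_1)^{-1}\mathbf{W}_1^{\prime},\quad \tilde{\mathbf{X}}_1 = \mathbf{M}_1\mathbf{X}_1.$$ Consider the model $$\mathbf{y}_0 = \mathbf{Z}_0\boldsymbol{\alpha}_0 + \mathbf{X}_0\boldsymbol{\beta}_0 + \boldsymbol{\epsilon}_0,\qquad \mathbf{y}_1 = \mathbf{W}_1\boldsymbol{\alpha}_1 + \mathbf{X}_1\boldsymbol{\beta}_1 + \boldsymbol{\epsilon}_1,\qquad \boldsymbol{\beta}_1 = \boldsymbol{\beta}_0 +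 \boldsymbol{\eta},$$ where $\boldsymbol{\alpha}_0,\boldsymbol{\alpha}_1,\boldsymbol{\beta}_0$ are fixed, $\boldsymbol{\epsilon}_j$ ($j=0,1$) is a random vector with mean $\mathbf{0}$ and covariance $\sigma_j^2\mathbf{I}_{n_j}$, $\boldsymbol{\eta}$ is a random vector with mean $\mathbf{0}$ and covariance $\sigma_\eta^2\mathbf{I}_k$, and $\boldsymbol{\epsilon}_0,\boldsymbol{\epsilon}_1,\boldsymbol{\eta}$ are mutually independent. Define the prediction $$\hat{\mathbf{y}}_{1\mid 0} = \mathbf{W}_1\hat{\boldsymbol{\alpha}}_1 + \mathbf{X}_1\hat{\boldsymbol{\beta}}_0,\quad \hat{\boldsymbol{\beta}}_0 = (\tilde{\mathbf{X}}_0^{\prime}\tilde{\mathbf{X}}_0)^{-1}\tilde{\mathbf{X}}_0^{\prime}\mathbf{y}_0,\quad \hat{\boldsymbol{\alpha}}_1 = (\mathbf{W}_1^{\prime}\mathbf{W}_1)^{-1}\mathbf{W}_1^{\prime}(\mathbf{y}_1 - \mathbf{X}_1\hat{\boldsymbol{\beta}}_0).$$ Then $$\frac{1}{n_1}E\left[(\mathbf{y}_1 - \hat{\mathbf{y}}_{1\mid 0})^{\prime}(\mathbf{y}_1 - \hat{\mathbf{y}}_{1\mid 0})\right] = \frac{n_1 - k_1}{n_1}\sigma_1^2 + \frac{\sigma_\eta^2}{n_1}\operatorname{tr}\left(\tilde{\mathbf{X}}_1^{\prime}\tilde{\mathbf{X}}_1\right) + \frac{\sigma_0^2}{n_1}\operatorname{tr}\left\{(\tilde{\mathbf{X}}_0^{\prime}\tilde{\mathbf{X}}_0)^{-1}\tilde{\mathbf{X}}_1^{\prime}\tilde{\mathbf{X}}_1\right\},$$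 where $k_1$ is the number of predictors (columns) in $\mathbf{W}_1$.
   Context: Two datasets indexed by disjoint index sets $\mathcal{S}_0,\mathcal{S}_1$ with $n_j = |\mathcal{S}_j|$; $\mathbf{y}_j$ stacks the responses of dataset $j$. $\mathbf{X}_0,\mathbf{X}_1$ contain the predictors common to both datasets (with random coefficients linked by $\boldsymbol{\eta}$), while $\mathbf{Z}_0$ and $\mathbf{W}_1$ contain dataset-specific predictors with unrestricted coefficients. The expectation is over $\boldsymbol{\epsilon}_0,\boldsymbol{\epsilon}_1,\boldsymbol{\eta}$ with the design matrices held fixed. *)

theory Defs
  imports "HOL-Probability.Probability"
begin

definition resid_maker :: "real^'m^'n \<Rightarrow> real^'n^'n" where
  "resid_maker Z = mat 1 - Z ** matrix_inv (transpose Z ** Z) ** transpose Z"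

definition white_noise :: "'a measure \<Rightarrow> ('a \<Rightarrow> real^'n) \<Rightarrow> real \<Rightarrow> bool" where
  "white_noise M e s \<longleftrightarrow>
     (\<forall>i. integrable M (\<lambda>w. e w $ i) \<and> integral\<^sup>L M (\<lambda>w. e w $ i) = 0) \<and>
     (\<forall>i j. integrable M (\<lambda>w. e w $ i * e w $ j) \<and>
            integral\<^sup>L M (\<lambda>w. e w $ i * e w $ j) = (if i = j then s\<^sup>2 else 0))"

definition gen_sigma :: "'a measure \<Rightarrow> ('a \<Rightarrow> 'b::topological_space) \<Rightarrow> 'a set set" where
  "gen_sigma M X = sigma_sets (space M) {X -` A \<inter> space M | A. A \<in> sets borel}"

text \<open>Mutual independence of three random variables with possibly different codomains
  (the unfolded form of indep_vars, which needs a common codomain type).\<close>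
definition indep3 :: "'a measure \<Rightarrow> ('a \<Rightarrow> 'b::topological_space) \<Rightarrow> ('a \<Rightarrow> 'c::topological_space)
    \<Rightarrow> ('a \<Rightarrow> 'd::topological_space) \<Rightarrow> bool" where
  "indep3 M X Y Z \<longleftrightarrow>
     X \<in> borel_measurable M \<and> Y \<in> borel_measurable M \<and> Z \<in> borel_measurable M \<and>
     prob_space.indep_sets M
       (\<lambda>i::nat. if i = 0 then gen_sigma M X else if i = 1 then gen_sigma M Y else gen_sigma M Z)
       {0, 1, 2}"

end

theory Submission
  imports Defs
begin


lemma mm_sub_r: "((A::real^'n^'m) - B) ** C = A ** C - B ** C"
  by (simp add: matrix_matrix_mult_def vec_eq_iff sum_subtractf algebra_simps)
lemma mm_sub_l: "(A::real^'n^'m) ** (B - C) = A ** B - A ** C"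
  by (simp add: matrix_matrix_mult_def vec_eq_iff sum_subtractf algebra_simps)
lemma mm_zero_l[simp]: "(0::real^'n^'m) ** A = 0"
  by (simp add: matrix_matrix_mult_def vec_eq_iff)
lemma mm_zero_r[simp]: "(A::real^'n^'m) ** 0 = 0"
  by (simp add: matrix_matrix_mult_def vec_eq_iff)
lemma transpose_sub: "transpose ((A::real^'n^'m) - B) = transpose A - transpose B"
  by (simp add: transpose_def vec_eq_iff)
lemma transpose_uminus: "transpose (- (A::real^'n^'m)) = - transpose A"
  by (simp add: transpose_def vec_eq_iff)
lemma mm_uminus_l: "(- (A::real^'n^'m)) ** B = - (A ** B)"
  by (simp add: matrix_matrix_mult_def vec_eq_iff sum_negf)
lemma mm_uminus_r: "(A::real^'n^'m) ** (- B) = - (A ** B)"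
  by (simp add: matrix_matrix_mult_def vec_eq_iff sum_negf)
lemma mv_uminus: "(- (A::real^'n^'m)) *v x = - (A *v x)"
  by (simp add: matrix_vector_mult_def vec_eq_iff sum_negf)

lemma minv:
  fixes A :: "real^'n^'n" assumes "invertible A"
  shows "A ** matrix_inv A = mat 1" "matrix_inv A ** A = mat 1"
  using someI_ex[OF assms[unfolded invertible_def]] unfolding matrix_inv_def by auto

lemma minv_sym:
  fixes G :: "real^'n^'n" assumes "invertible G" "transpose G = G"
  shows "transpose (matrix_inv G) = matrix_inv G"
proof -
  have "transpose (matrix_inv G) ** G = mat 1"
    by (metis assms matrix_transpose_mul minv(1) transpose_mat)
  then have "transpose (matrix_inv G) = transpose (matrix_inv G) ** (G ** matrix_inv G)"
    using minv(1)[OF assms(1)] by simp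
  also have "\<dots> = matrix_inv G" by (simp add: matrix_mul_assoc \<open>transpose (matrix_inv G) ** G = mat 1\<close>)
  finally show ?thesis .
qed

lemma resid_props:
  fixes Z :: "real^'m^'n"
  assumes inv: "invertible (transpose Z ** Z)"
  shows "transpose (resid_maker Z) = resid_maker Z"
    and "resid_maker Z ** Z = 0"
    and "resid_maker Z ** resid_maker Z = resid_maker Z"
    and "trace (resid_maker Z) = real CARD('n) - real CARD('m)"
proof -
  let ?G = "matrix_inv (transpose Z ** Z)"
  have sG: "transpose ?G = ?G"
    by (rule minv_sym[OF inv]) (simp add: matrix_transpose_mul)
  show t: "transpose (resid_maker Z) = resid_maker Z"
    unfolding resid_maker_def transpose_sub
    by (simp add: matrix_transpose_mul sG matrix_mul_assoc)
  show z: "resid_maker Z ** Z = 0"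
    unfolding resid_maker_def mm_sub_r
    by (simp add: matrix_mul_assoc[symmetric] minv(2)[OF inv])
  show "resid_maker Z ** resid_maker Z = resid_maker Z"
    apply (subst (2) resid_maker_def)
    unfolding mm_sub_l by (simp add: matrix_mul_assoc z)
  have "trace (Z ** ?G ** transpose Z) = trace (?G ** transpose Z ** Z)"
    by (metis matrix_mul_assoc trace_mul_sym)
  also have "\<dots> = real CARD('m)"
    by (simp add: matrix_mul_assoc[symmetric] minv(2)[OF inv] trace_I)
  finally show "trace (resid_maker Z) = real CARD('n) - real CARD('m)"
    unfolding resid_maker_def trace_sub trace_I by simp
qed



lemma quad_expand:
  fixes B :: "real^'n^'m" and C :: "real^'p^'m" and x :: "real^'n" and y :: "real^'p"
  shows "(B *v x) \<bullet> (C *v y) = (\<Sum>j\<in>UNIV. \<Sum>l\<in>UNIV. (\<Sum>i\<in>UNIV. B$i$j * C$i$l) * (x$j * y$l))"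
proof -
  have "(B *v x) \<bullet> (C *v y) = (\<Sum>i\<in>UNIV. \<Sum>j\<in>UNIV. \<Sum>l\<in>UNIV. B$i$j * C$i$l * (x$j * y$l))"
    by (simp add: inner_vec_def matrix_vector_mult_def sum_product algebra_simps)
  also have "\<dots> = (\<Sum>j\<in>UNIV. \<Sum>i\<in>UNIV. \<Sum>l\<in>UNIV. B$i$j * C$i$l * (x$j * y$l))"
    by (rule sum.swap)
  also have "\<dots> = (\<Sum>j\<in>UNIV. \<Sum>l\<in>UNIV. \<Sum>i\<in>UNIV. B$i$j * C$i$l * (x$j * y$l))"
    by (intro sum.cong refl sum.swap)
  also have "\<dots> = (\<Sum>j\<in>UNIV. \<Sum>l\<in>UNIV. (\<Sum>i\<in>UNIV. B$i$j * C$i$l) * (x$j * y$l))"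
    by (simp add: sum_distrib_right)
  finally show ?thesis .
qed

lemma quad_white:
  fixes B C :: "real^'n^'m" and e :: "'a \<Rightarrow> real^'n"
  assumes "white_noise M e s"
  shows "integrable M (\<lambda>w. (B *v e w) \<bullet> (C *v e w))"
    and "integral\<^sup>L M (\<lambda>w. (B *v e w) \<bullet> (C *v e w)) = s\<^sup>2 * trace (transpose B ** C)"
proof -
  have I: "\<And>j l. integrable M (\<lambda>w. e w $ j * e w $ l)"
   and E: "\<And>j l. integral\<^sup>L M (\<lambda>w. e w $ j * e w $ l) = (if j = l then s\<^sup>2 else 0)"
    using assms unfolding white_noise_def by auto
  show "integrable M (\<lambda>w. (B *v e w) \<bullet> (C *v e w))"
    unfolding quad_expand by (auto intro!: integrable_sum integrable_mult_right I)
  have "integral\<^sup>L M (\<lambda>w. (B *v e w) \<bullet> (C *v e w))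
      = (\<Sum>j\<in>UNIV. \<Sum>l\<in>UNIV. (\<Sum>i\<in>UNIV. B$i$j * C$i$l) * (if j = l then s\<^sup>2 else 0))"
    unfolding quad_expand
    by (simp add: integral_sum integrable_sum integrable_mult_right I E del: integral_mult_right_zero)
  also have "\<dots> = (\<Sum>j\<in>UNIV. (\<Sum>i\<in>UNIV. B$i$j * C$i$j) * s\<^sup>2)"
    by (simp add: if_distrib cong: if_cong)
  also have "\<dots> = s\<^sup>2 * trace (transpose B ** C)"
    by (simp add: trace_def matrix_matrix_mult_def transpose_def sum_distrib_left mult.commute)
  finally show "integral\<^sup>L M (\<lambda>w. (B *v e w) \<bullet> (C *v e w)) = s\<^sup>2 * trace (transpose B ** C)" .
qed

lemma quad_cross:
  fixes B :: "real^'n^'m" and C :: "real^'p^'m" and e :: "'a \<Rightarrow> real^'n" and f :: "'a \<Rightarrow> real^'p"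
  assumes I: "\<And>j l. integrable M (\<lambda>w. e w $ j * f w $ l)"
   and E: "\<And>j l. integral\<^sup>L M (\<lambda>w. e w $ j * f w $ l) = 0"
  shows "integrable M (\<lambda>w. (B *v e w) \<bullet> (C *v f w))"
    and "integral\<^sup>L M (\<lambda>w. (B *v e w) \<bullet> (C *v f w)) = 0"
proof -
  show "integrable M (\<lambda>w. (B *v e w) \<bullet> (C *v f w))"
    unfolding quad_expand by (auto intro!: integrable_sum integrable_mult_right I)
  show "integral\<^sup>L M (\<lambda>w. (B *v e w) \<bullet> (C *v f w)) = 0"
    unfolding quad_expand
    by (simp add: integral_sum integrable_sum integrable_mult_right I E del: integral_mult_right_zero)
qed

lemma (in prob_space) indep_sets_pair:
  assumes "indep_sets F I" "i \<in> I" "j \<in> I" "i \<noteq> j"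
  shows "indep_set (F i) (F j)"
proof (rule indep_setI)
  show "F i \<subseteq> events" "F j \<subseteq> events" using assms unfolding indep_sets_def by auto
  fix a b assume ab: "a \<in> F i" "b \<in> F j"
  have "prob (\<Inter>k\<in>{i,j}. (\<lambda>k. if k = i then a else b) k) = (\<Prod>k\<in>{i,j}. prob ((\<lambda>k. if k = i then a else b) k))"
    using assms ab by (intro indep_setsD[OF assms(1)]) auto
  then show "prob (a \<inter> b) = prob a * prob b" using assms(4) by (simp add: Int_commute)
qed

lemma (in prob_space) indep_comp:
  fixes e :: "'a \<Rightarrow> real^'n" and f :: "'a \<Rightarrow> real^'p"
  assumes "indep_set (gen_sigma M e) (gen_sigma M f)"
    and "e \<in> borel_measurable M" "f \<in> borel_measurable M"
    and "white_noise M e s" "white_noise M f t"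
  shows "integrable M (\<lambda>w. e w $ j * f w $ l)" "integral\<^sup>L M (\<lambda>w. e w $ j * f w $ l) = 0"
proof -
  have m: "(\<lambda>x::real^'q. x $ i) \<in> borel_measurable borel" for i :: "'q::finite"
    by (intro borel_measurable_continuous_onI continuous_intros)
  have sub: "sigma_sets (space M) {(\<lambda>w. g w $ i) -` A \<inter> space M | A. A \<in> sets borel} \<subseteq> gen_sigma M g"
    for g :: "'a \<Rightarrow> real^'q::finite" and i
    unfolding gen_sigma_def
  proof (rule sigma_sets_mono')
    show "{(\<lambda>w. g w $ i) -` A \<inter> space M | A. A \<in> sets borel} \<subseteq> {g -` A \<inter> space M | A. A \<in> sets borel}"
    proof safe
      fix A :: "real set" assume A: "A \<in> sets borel"
      have "(\<lambda>x::real^'q. x $ i) -` A \<inter> space borel \<in> sets borel" by (rule measurable_sets[OF m A])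
      moreover have "(\<lambda>w. g w $ i) -` A \<inter> space M = g -` ((\<lambda>x::real^'q. x $ i) -` A \<inter> space borel) \<inter> space M"
        by (simp add: set_eq_iff)
      ultimately show "\<exists>B. (\<lambda>w. g w $ i) -` A \<inter> space M = g -` B \<inter> space M \<and> B \<in> sets borel" by blast
    qed
  qed
  have rv: "(\<lambda>w. g w $ i) \<in> borel_measurable M" if "g \<in> borel_measurable M" for g :: "'a \<Rightarrow> real^'q::finite" and i
    using measurable_compose[OF that m] by (simp add: o_def)
  have ind2: "indep_set (sigma_sets (space M) {(\<lambda>w. e w $ j) -` A \<inter> space M | A. A \<in> sets borel})
                        (sigma_sets (space M) {(\<lambda>w. f w $ l) -` A \<inter> space M | A. A \<in> sets borel})"
  proof -
    note h = assms(1)[unfolded indep_sets2_eq]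
    have s1: "sigma_sets (space M) {(\<lambda>w. e w $ j) -` A \<inter> space M | A. A \<in> sets borel} \<subseteq> gen_sigma M e"
      by (rule sub)
    have s2: "sigma_sets (space M) {(\<lambda>w. f w $ l) -` A \<inter> space M | A. A \<in> sets borel} \<subseteq> gen_sigma M f"
      by (rule sub)
    show ?thesis unfolding indep_sets2_eq
    proof (intro conjI ballI)
      show "sigma_sets (space M) {(\<lambda>w. e w $ j) -` A \<inter> space M | A. A \<in> sets borel} \<subseteq> events"
        using s1 h by (meson order_trans)
      show "sigma_sets (space M) {(\<lambda>w. f w $ l) -` A \<inter> space M | A. A \<in> sets borel} \<subseteq> events"
        using s2 h by (meson order_trans)
      fix a b assume "a \<in> sigma_sets (space M) {(\<lambda>w. e w $ j) -` A \<inter> space M | A. A \<in> sets borel}"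
        "b \<in> sigma_sets (space M) {(\<lambda>w. f w $ l) -` A \<inter> space M | A. A \<in> sets borel}"
      then have "a \<in> gen_sigma M e" "b \<in> gen_sigma M f" using s1 s2 by (auto simp del: )
      then show "prob (a \<inter> b) = prob a * prob b" using h by simp
    qed
  qed
  have iv2: "indep_var borel (\<lambda>w. e w $ j) borel (\<lambda>w. f w $ l)"
    unfolding indep_var_eq using ind2 rv[OF assms(2)] rv[OF assms(3)] by simp
  have ie: "integrable M (\<lambda>w. e w $ j)" "integral\<^sup>L M (\<lambda>w. e w $ j) = 0"
    using assms(4) unfolding white_noise_def by auto
  have if': "integrable M (\<lambda>w. f w $ l)"
    using assms(5) unfolding white_noise_def by auto
  show "integrable M (\<lambda>w. e w $ j * f w $ l)"
    by (rule indep_var_integrable[OF iv2 ie(1) if'])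
  show "integral\<^sup>L M (\<lambda>w. e w $ j * f w $ l) = 0"
    using indep_var_lebesgue_integral[OF iv2 ie(1) if'] ie(2) by simp
qed



lemma int6:
  fixes f1 f2 f3 f4 f5 f6 :: "'a \<Rightarrow> real"
  assumes "integrable M f1" "integrable M f2" "integrable M f3" "integrable M f4" "integrable M f5" "integrable M f6"
  shows "integral\<^sup>L M (\<lambda>w. f1 w + f2 w + f3 w + 2 * f4 w + 2 * f5 w + 2 * f6 w)
     = integral\<^sup>L M f1 + integral\<^sup>L M f2 + integral\<^sup>L M f3 + 2 * integral\<^sup>L M f4 + 2 * integral\<^sup>L M f5 + 2 * integral\<^sup>L M f6"
  using assms by (simp add: integrable_mult_right)

lemma arith_fin:
  fixes n k a b c T1 T2 :: real
  assumes "n > 0"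
  shows "1 / n * (a * T1 + b * (n - k) + c * T2) = (n - k) / n * b + a / n * T1 + c / n * T2"
  using assms by (simp add: field_simps)

lemma inner3:
  fixes a b c :: "real^'n"
  shows "(a + b + c) \<bullet> (a + b + c) = a \<bullet> a + b \<bullet> b + c \<bullet> c + 2 * (a \<bullet> b) + 2 * (a \<bullet> c) + 2 * (b \<bullet> c)"
  by (simp add: inner_add_left inner_add_right inner_commute)

theorem proposition2:
  fixes M :: "'a measure"
    and Z0 :: "real^'m0^'n0" and X0 :: "real^'k^'n0"
    and W1 :: "real^'k1^'n1" and X1 :: "real^'k^'n1"
    and \<alpha>0 :: "real^'m0" and \<alpha>1 :: "real^'k1" and \<beta>0 :: "real^'k"
    and \<epsilon>0 :: "'a \<Rightarrow> real^'n0" and \<epsilon>1 :: "'a \<Rightarrow> real^'n1" and \<eta> :: "'a \<Rightarrow> real^'k"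
    and \<sigma>0 \<sigma>1 \<sigma>\<eta> :: real
    and y0 :: "'a \<Rightarrow> real^'n0" and y1 :: "'a \<Rightarrow> real^'n1"
  assumes P: "prob_space M"
    and invZ: "invertible (transpose Z0 ** Z0)"
    and invW: "invertible (transpose W1 ** W1)"
    and invX0: "invertible (transpose (resid_maker Z0 ** X0) ** (resid_maker Z0 ** X0))"
    and wn0: "white_noise M \<epsilon>0 \<sigma>0"
    and wn1: "white_noise M \<epsilon>1 \<sigma>1"
    and wn\<eta>: "white_noise M \<eta> \<sigma>\<eta>"
    and ind: "indep3 M \<epsilon>0 \<epsilon>1 \<eta>"
    and y0_def: "\<And>w. y0 w = Z0 *v \<alpha>0 + X0 *v \<beta>0 + \<epsilon>0 w"
    and y1_def: "\<And>w. y1 w = W1 *v \<alpha>1 + X1 *v (\<beta>0 + \<eta> w) + \<epsilon>1 w"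
  shows
    "(let M0 = resid_maker Z0; Xt0 = M0 ** X0;
          M1 = resid_maker W1; Xt1 = M1 ** X1;
          \<beta>hat0 = (\<lambda>w. (matrix_inv (transpose Xt0 ** Xt0) ** transpose Xt0) *v y0 w);
          \<alpha>hat1 = (\<lambda>w. (matrix_inv (transpose W1 ** W1) ** transpose W1) *v (y1 w - X1 *v \<beta>hat0 w));
          yhat = (\<lambda>w. W1 *v \<alpha>hat1 w + X1 *v \<beta>hat0 w);
          n1 = real CARD('n1); k1 = real CARD('k1)
      in (1 / n1) * integral\<^sup>L M (\<lambda>w. (y1 w - yhat w) \<bullet> (y1 w - yhat w))
         = (n1 - k1) / n1 * \<sigma>1\<^sup>2
           + \<sigma>\<eta>\<^sup>2 / n1 * trace (transpose Xt1 ** Xt1)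
           + \<sigma>0\<^sup>2 / n1 * trace (matrix_inv (transpose Xt0 ** Xt0) ** (transpose Xt1 ** Xt1)))"
proof -
  interpret prob_space M by (rule P)
  let ?M0 = "resid_maker Z0"
  let ?Xt0 = "?M0 ** X0"
  let ?M1 = "resid_maker W1"
  let ?Xt1 = "?M1 ** X1"
  let ?G0 = "matrix_inv (transpose ?Xt0 ** ?Xt0)"
  let ?Gw = "matrix_inv (transpose W1 ** W1)"
  let ?A = "?G0 ** transpose ?Xt0"
  let ?bh = "\<lambda>w. ?A *v y0 w"
  let ?ah = "\<lambda>w. (?Gw ** transpose W1) *v (y1 w - X1 *v ?bh w)"
  let ?yh = "\<lambda>w. W1 *v ?ah w + X1 *v ?bh w"
  note R0 = resid_props[OF invZ]
  note R1 = resid_props[OF invW]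
  have tXt0: "transpose ?Xt0 = transpose X0 ** ?M0"
    by (simp add: matrix_transpose_mul R0(1))
  have XZ: "transpose ?Xt0 ** Z0 = 0"
    by (simp add: tXt0 matrix_mul_assoc[symmetric] R0(2))
  have XX: "transpose ?Xt0 ** X0 = transpose ?Xt0 ** ?Xt0"
  proof -
    have "transpose ?Xt0 ** ?Xt0 = transpose X0 ** (?M0 ** ?M0) ** X0" by (simp only: tXt0 matrix_mul_assoc)
    also have "\<dots> = transpose ?Xt0 ** X0" by (simp only: R0(3) tXt0)
    finally show ?thesis by simp
  qed
  have AZ: "?A ** Z0 = 0" by (simp add: matrix_mul_assoc[symmetric] XZ)
  have AX: "?A ** X0 = mat 1" by (simp add: matrix_mul_assoc[symmetric] XX minv(2)[OF invX0])
  have bh: "?bh w = \<beta>0 + ?A *v \<epsilon>0 w" for w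
    unfolding y0_def by (simp add: matrix_vector_right_distrib matrix_vector_mul_assoc AZ AX)
  have sG0: "transpose ?G0 = ?G0"
    by (rule minv_sym[OF invX0]) (simp add: matrix_transpose_mul)
  have AA: "?A ** transpose ?A = ?G0"
  proof -
    have "?A ** transpose ?A = (?G0 ** (transpose ?Xt0 ** ?Xt0)) ** transpose ?G0"
      by (simp only: matrix_transpose_mul transpose_transpose matrix_mul_assoc)
    also have "\<dots> = ?G0" by (simp only: minv(2)[OF invX0] sG0 matrix_mul_lid)
    finally show ?thesis .
  qed
  have M1v: "?M1 *v u = u - W1 *v ((?Gw ** transpose W1) *v u)" for u
    unfolding resid_maker_def
    by (simp add: matrix_vector_mult_diff_rdistrib matrix_vector_mul_assoc matrix_mul_assoc)
  have res: "y1 w - ?yh w = ?Xt1 *v \<eta> w + ?M1 *v \<epsilon>1 w + (- (?Xt1 ** ?A)) *v \<epsilon>0 w" for w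
  proof -
    have u: "y1 w - X1 *v ?bh w = W1 *v \<alpha>1 + X1 *v \<eta> w + \<epsilon>1 w - X1 *v (?A *v \<epsilon>0 w)"
      unfolding bh y1_def by (simp add: matrix_vector_right_distrib algebra_simps)
    have "y1 w - ?yh w = ?M1 *v (y1 w - X1 *v ?bh w)"
      unfolding M1v by (simp add: algebra_simps)
    also have "\<dots> = (?M1 ** W1) *v \<alpha>1 + ?Xt1 *v \<eta> w + ?M1 *v \<epsilon>1 w - (?Xt1 ** ?A) *v \<epsilon>0 w"
      unfolding u by (simp add: matrix_vector_right_distrib matrix_vector_mult_diff_distrib matrix_vector_mul_assoc matrix_mul_assoc)
    finally show ?thesis by (simp add: R1(2) mv_uminus)
  qed
  have meas: "\<epsilon>0 \<in> borel_measurable M" "\<epsilon>1 \<in> borel_measurable M" "\<eta> \<in> borel_measurable M"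
    and IS: "indep_sets (\<lambda>i::nat. if i = 0 then gen_sigma M \<epsilon>0 else if i = 1 then gen_sigma M \<epsilon>1 else gen_sigma M \<eta>) {0, 1, 2}"
    using ind unfolding indep3_def by auto
  have i21: "indep_set (gen_sigma M \<eta>) (gen_sigma M \<epsilon>1)"
    using indep_sets_pair[OF IS, of 2 1] by simp
  have i20: "indep_set (gen_sigma M \<eta>) (gen_sigma M \<epsilon>0)"
    using indep_sets_pair[OF IS, of 2 0] by simp
  have i10: "indep_set (gen_sigma M \<epsilon>1) (gen_sigma M \<epsilon>0)"
    using indep_sets_pair[OF IS, of 1 0] by simp
  note c21 = indep_comp[OF i21 meas(3) meas(2) wn\<eta> wn1]
  note c20 = indep_comp[OF i20 meas(3) meas(1) wn\<eta> wn0]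
  note c10 = indep_comp[OF i10 meas(2) meas(1) wn1 wn0]
  let ?C = "- (?Xt1 ** ?A)"
  let ?a = "\<lambda>w. ?Xt1 *v \<eta> w"
  let ?b = "\<lambda>w. ?M1 *v \<epsilon>1 w"
  let ?c = "\<lambda>w. ?C *v \<epsilon>0 w"
  have expand: "(\<lambda>w. (y1 w - ?yh w) \<bullet> (y1 w - ?yh w)) =
     (\<lambda>w. ?a w \<bullet> ?a w + ?b w \<bullet> ?b w + ?c w \<bullet> ?c w + 2 * (?a w \<bullet> ?b w) + 2 * (?a w \<bullet> ?c w) + 2 * (?b w \<bullet> ?c w))"
    unfolding res inner3 by simp
  note qa = quad_white[OF wn\<eta>, of ?Xt1 ?Xt1]
  note qb = quad_white[OF wn1, of ?M1 ?M1]
  note qc = quad_white[OF wn0, of ?C ?C]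
  note xab = quad_cross[of M \<eta> \<epsilon>1 ?Xt1 ?M1, OF c21]
  note xac = quad_cross[of M \<eta> \<epsilon>0 ?Xt1 ?C, OF c20]
  note xbc = quad_cross[of M \<epsilon>1 \<epsilon>0 ?M1 ?C, OF c10]
  have int_eq: "integral\<^sup>L M (\<lambda>w. (y1 w - ?yh w) \<bullet> (y1 w - ?yh w)) =
      \<sigma>\<eta>\<^sup>2 * trace (transpose ?Xt1 ** ?Xt1) + \<sigma>1\<^sup>2 * trace (transpose ?M1 ** ?M1)
      + \<sigma>0\<^sup>2 * trace (transpose ?C ** ?C)"
    unfolding expand
    unfolding expand int6[OF qa(1) qb(1) qc(1) xab(1) xac(1) xbc(1)] qa(2) qb(2) qc(2) xab(2) xac(2) xbc(2)
    by simp
  have tM1: "trace (transpose ?M1 ** ?M1) = real CARD('n1) - real CARD('k1)"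
    by (simp add: R1(1) R1(3) R1(4))
  have tC: "trace (transpose ?C ** ?C) = trace (?G0 ** (transpose ?Xt1 ** ?Xt1))"
  proof -
    have "trace (transpose ?C ** ?C) = trace (transpose ?A ** ((transpose ?Xt1 ** ?Xt1) ** ?A))"
    proof -
      have "trace (transpose ?C ** ?C) = trace (transpose (?Xt1 ** ?A) ** (?Xt1 ** ?A))"
        by (simp only: transpose_uminus mm_uminus_l mm_uminus_r minus_minus)
      also have "\<dots> = trace (transpose ?A ** ((transpose ?Xt1 ** ?Xt1) ** ?A))"
        by (simp only: matrix_transpose_mul matrix_mul_assoc)
      finally show ?thesis .
    qed
    also have "\<dots> = trace ((transpose ?Xt1 ** ?Xt1) ** (?A ** transpose ?A))"
    proof -
      have "trace (transpose ?A ** ((transpose ?Xt1 ** ?Xt1) ** ?A)) = trace (((transpose ?Xt1 ** ?Xt1) ** ?A) ** transpose ?A)"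
        by (rule trace_mul_sym)
      also have "\<dots> = trace ((transpose ?Xt1 ** ?Xt1) ** (?A ** transpose ?A))"
        by (simp only: matrix_mul_assoc)
      finally show ?thesis .
    qed
    also have "\<dots> = trace (?G0 ** (transpose ?Xt1 ** ?Xt1))"
      unfolding AA by (rule trace_mul_sym)
    finally show ?thesis .
  qed
  have n1: "real CARD('n1) > 0" by simp
  show ?thesis
    unfolding Let_def int_eq tM1 tC
    by (rule arith_fin[OF n1])
qed

end
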